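(* For every $n\ge 1$, the Jonquières group $\mathcal{B}_n$ is solvable of derived length $n+1$.
   Context: $\mathcal{B}_n=\{f=(f_1,\dots,f_n)\in\mathrm{Aut}(\mathbb{A}^n_{\mathbb{C}}): f_i=a_ix_i+p_i,\ a_i\in\mathbb{C}^*,\ p_i\in\mathbb{C}[x_{i+1},\dots,x_n]\}$. For a group $G$, $D^0(G)=G$, $D^{k}(G)$ is the subgroup generated by commutators of $D^{k-1}(G)$; the derived length is the least $k$ with $D^k(G)=\{1\}$. *)

theory Defs
  imports Complex_Main "HOL-Algebra.Solvable_Groups"
begin

text \<open>Polynomial functions on points x :: nat \<Rightarrow> complex that only involve the
  coordinates x j with j \<in> V (i.e. elements of \<complex>[x_j : j \<in> V], viewed as functions;
  over the infinite field \<complex> polynomials and polynomial functions correspond bijectively).\<close>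
inductive_set poly_fun :: "nat set \<Rightarrow> ((nat \<Rightarrow> complex) \<Rightarrow> complex) set"
  for V :: "nat set" where
  const: "(\<lambda>x. c) \<in> poly_fun V"
| var: "j \<in> V \<Longrightarrow> (\<lambda>x. x j) \<in> poly_fun V"
| add: "p \<in> poly_fun V \<Longrightarrow> q \<in> poly_fun V \<Longrightarrow> (\<lambda>x. p x + q x) \<in> poly_fun V"
| mult: "p \<in> poly_fun V \<Longrightarrow> q \<in> poly_fun V \<Longrightarrow> (\<lambda>x. p x * q x) \<in> poly_fun V"

text \<open>Points of \<A>^n are represented by x :: nat \<Rightarrow> complex; only the coordinates
  x 1, ..., x n matter, all other coordinates are normalised to 0.\<close>
definition jonq_id :: "nat \<Rightarrow> (nat \<Rightarrow> complex) \<Rightarrow> (nat \<Rightarrow> complex)" where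
  "jonq_id n = (\<lambda>x i. if i \<in> {1..n} then x i else 0)"

definition jonq_set :: "nat \<Rightarrow> ((nat \<Rightarrow> complex) \<Rightarrow> (nat \<Rightarrow> complex)) set" where
  "jonq_set n = {f. \<exists>a p. (\<forall>i\<in>{1..n}. a i \<noteq> (0::complex) \<and> p i \<in> poly_fun {i+1..n}) \<and>
      f = (\<lambda>x i. if i \<in> {1..n} then a i * x i + p i x else 0)}"

definition jonquieres :: "nat \<Rightarrow> ((nat \<Rightarrow> complex) \<Rightarrow> (nat \<Rightarrow> complex)) monoid" where
  "jonquieres n = \<lparr>carrier = jonq_set n, mult = (\<lambda>f g. f \<circ> g), one = jonq_id n\<rparr>"

definition derived_length :: "('a, 'b) monoid_scheme \<Rightarrow> nat" where
  "derived_length G = (LEAST k. (derived G ^^ k) (carrier G) = {\<one>\<^bsub>G\<^esub>})"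

end

theory Submission
  imports Defs
begin


lemma poly_fun_dep: "p \<in> poly_fun V \<Longrightarrow> (\<forall>j\<in>V. x j = y j) \<Longrightarrow> p x = p y"
  by (induction p rule: poly_fun.induct) auto

lemma poly_fun_mono: "p \<in> poly_fun V \<Longrightarrow> V \<subseteq> W \<Longrightarrow> p \<in> poly_fun W"
  by (induction p rule: poly_fun.induct) (auto intro: poly_fun.intros)

lemma poly_fun_subst: "p \<in> poly_fun V \<Longrightarrow> (\<forall>j\<in>V. (\<lambda>x. g x j) \<in> poly_fun W) \<Longrightarrow> (\<lambda>x. p (g x)) \<in> poly_fun W"
  by (induction p rule: poly_fun.induct) (auto intro: poly_fun.intros)

lemma poly_fun_cmult: "p \<in> poly_fun V \<Longrightarrow> (\<lambda>x. c * p x) \<in> poly_fun V"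
  using poly_fun.mult[OF poly_fun.const] by blast

lemma poly_fun_diff: "p \<in> poly_fun V \<Longrightarrow> q \<in> poly_fun V \<Longrightarrow> (\<lambda>x. p x - q x) \<in> poly_fun V"
proof -
  assume "p \<in> poly_fun V" "q \<in> poly_fun V"
  then have "(\<lambda>x. p x + (-1) * q x) \<in> poly_fun V" by (intro poly_fun.add poly_fun_cmult)
  then show ?thesis by simp
qed

lemma poly_fun_prod: "finite S \<Longrightarrow> S \<subseteq> V \<Longrightarrow> (\<lambda>x. \<Prod>l\<in>S. x l) \<in> poly_fun V"
proof (induction S rule: finite_induct)
  case empty then show ?case using poly_fun.const[of 1] by simp
next
  case (insert a S) then show ?case by (auto intro!: poly_fun.intros)
qed

lemma jonq_setI:
  assumes "\<And>x i. i \<notin> {1..n} \<Longrightarrow> f x i = 0"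
    and "\<And>i. i \<in> {1..n} \<Longrightarrow> \<exists>a p. a \<noteq> 0 \<and> p \<in> poly_fun {i+1..n} \<and> (\<forall>x. f x i = a * x i + p x)"
  shows "f \<in> jonq_set n"
proof -
  from assms(2) obtain a p where ap: "\<And>i. i \<in> {1..n} \<Longrightarrow> a i \<noteq> 0 \<and> p i \<in> poly_fun {i+1..n} \<and> (\<forall>x. f x i = a i * x i + p i x)"
    by metis
  have "f = (\<lambda>x i. if i \<in> {1..n} then a i * x i + p i x else 0)"
    using ap assms(1) by (auto simp: fun_eq_iff)
  then show ?thesis unfolding jonq_set_def using ap by blast
qed

lemma jonq_setD:
  assumes "f \<in> jonq_set n"
  shows "\<And>x i. i \<notin> {1..n} \<Longrightarrow> f x i = 0"
    and "\<And>i. i \<in> {1..n} \<Longrightarrow> \<exists>a p. a \<noteq> 0 \<and> p \<in> poly_fun {i+1..n} \<and> (\<forall>x. f x i = a * x i + p x)"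
proof -
  from assms obtain a p where ap: "\<forall>i\<in>{1..n}. a i \<noteq> (0::complex) \<and> p i \<in> poly_fun {i+1..n}"
    and f: "f = (\<lambda>x i. if i \<in> {1..n} then a i * x i + p i x else 0)"
    unfolding jonq_set_def by blast
  show "\<And>x i. i \<notin> {1..n} \<Longrightarrow> f x i = 0" using f by auto
  show "\<And>i. i \<in> {1..n} \<Longrightarrow> \<exists>a p. a \<noteq> 0 \<and> p \<in> poly_fun {i+1..n} \<and> (\<forall>x. f x i = a * x i + p x)"
  proof -
    fix i assume i: "i \<in> {1..n}"
    then show "\<exists>a p. a \<noteq> 0 \<and> p \<in> poly_fun {i+1..n} \<and> (\<forall>x. f x i = a * x i + p x)"
      using ap f by (intro exI[of _ "a i"] exI[of _ "p i"]) auto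
  qed
qed

lemma jonq_coord_poly:
  assumes "f \<in> jonq_set n" "j \<in> {1..n}"
  shows "(\<lambda>x. f x j) \<in> poly_fun {j..n}"
proof -
  obtain a p where "p \<in> poly_fun {j+1..n}" "\<forall>x. f x j = a * x j + p x"
    using jonq_setD(2)[OF assms] by blast
  moreover have "(\<lambda>x. a * x j + p x) \<in> poly_fun {j..n}"
    using assms(2) calculation(1)
    by (intro poly_fun.add poly_fun_cmult poly_fun.var) (auto elim: poly_fun_mono)
  ultimately show ?thesis by simp
qed

lemma jonq_dep:
  assumes "f \<in> jonq_set n" "i \<in> {1..n}" "\<forall>j\<in>{i..n}. x j = y j"
  shows "f x i = f y i"
  using poly_fun_dep[OF jonq_coord_poly[OF assms(1,2)] assms(3)] by simp

definition cf :: "((nat \<Rightarrow> complex) \<Rightarrow> (nat \<Rightarrow> complex)) \<Rightarrow> nat \<Rightarrow> complex" where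
  "cf f i = f (\<lambda>j. if j = i then 1 else 0) i - f (\<lambda>j. 0) i"

lemma cf_unique:
  assumes "\<And>x. h x i = A * x i + B x"
    and "\<And>x y. (\<forall>j\<in>{i+1..n}. x j = y j) \<Longrightarrow> B x = B y"
  shows "cf h i = A"
proof -
  have "B (\<lambda>j. if j = i then 1 else 0) = B (\<lambda>j. 0)" by (rule assms(2)) auto
  then show ?thesis unfolding cf_def assms(1) by simp
qed

lemma jonq_cf:
  assumes "f \<in> jonq_set n" "i \<in> {1..n}"
  shows "cf f i \<noteq> 0" "\<exists>p\<in>poly_fun {i+1..n}. \<forall>x. f x i = cf f i * x i + p x"
proof -
  obtain a p where ap: "a \<noteq> 0" "p \<in> poly_fun {i+1..n}" "\<forall>x. f x i = a * x i + p x"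
    using jonq_setD(2)[OF assms] by blast
  have "cf f i = a" using ap by (intro cf_unique[where B=p and n=n]) (auto intro: poly_fun_dep)
  then show "cf f i \<noteq> 0" "\<exists>p\<in>poly_fun {i+1..n}. \<forall>x. f x i = cf f i * x i + p x" using ap by auto
qed

lemma jonq_rest:
  assumes "f \<in> jonq_set n" "i \<in> {1..n}" "\<forall>j\<in>{i+1..n}. x j = y j"
  shows "f x i - cf f i * x i = f y i - cf f i * y i"
proof -
  obtain p where "p \<in> poly_fun {i+1..n}" "\<forall>x. f x i = cf f i * x i + p x"
    using jonq_cf(2)[OF assms(1,2)] by blast
  then show ?thesis using poly_fun_dep[of p _ x y] assms(3) by simp
qed

lemma jonq_comp:
  assumes "f \<in> jonq_set n" "g \<in> jonq_set n"
  shows "f \<circ> g \<in> jonq_set n"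
proof (rule jonq_setI)
  show "\<And>x i. i \<notin> {1..n} \<Longrightarrow> (f \<circ> g) x i = 0" using jonq_setD(1)[OF assms(1)] by simp
  fix i assume i: "i \<in> {1..n}"
  obtain a p where ap: "a \<noteq> 0" "p \<in> poly_fun {i+1..n}" "\<forall>x. f x i = a * x i + p x"
    using jonq_setD(2)[OF assms(1) i] by blast
  obtain b q where bq: "b \<noteq> 0" "q \<in> poly_fun {i+1..n}" "\<forall>x. g x i = b * x i + q x"
    using jonq_setD(2)[OF assms(2) i] by blast
  have pg: "(\<lambda>x. p (g x)) \<in> poly_fun {i+1..n}"
  proof (rule poly_fun_subst[OF ap(2)], intro ballI)
    fix j assume "j \<in> {i+1..n}"
    then show "(\<lambda>x. g x j) \<in> poly_fun {i+1..n}"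
      using jonq_coord_poly[OF assms(2), of j] i by (auto elim: poly_fun_mono)
  qed
  have "\<forall>x. (f \<circ> g) x i = (a * b) * x i + (a * q x + p (g x))"
    using ap bq by (simp add: algebra_simps)
  moreover have "(\<lambda>x. a * q x + p (g x)) \<in> poly_fun {i+1..n}"
    using bq(2) pg by (intro poly_fun.add poly_fun_cmult)
  ultimately show "\<exists>a p. a \<noteq> 0 \<and> p \<in> poly_fun {i+1..n} \<and> (\<forall>x. (f \<circ> g) x i = a * x i + p x)"
    using ap(1) bq(1) by (intro exI[of _ "a*b"] exI[of _ "\<lambda>x. a * q x + p (g x)"]) simp
qed

lemma jonq_id_in: "jonq_id n \<in> jonq_set n"
proof (rule jonq_setI)
  show "\<And>x i. i \<notin> {1..n} \<Longrightarrow> jonq_id n x i = 0" unfolding jonq_id_def by auto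
  fix i assume "i \<in> {1..n}"
  then show "\<exists>a p. a \<noteq> 0 \<and> p \<in> poly_fun {i+1..n} \<and> (\<forall>x. jonq_id n x i = a * x i + p x)"
    by (intro exI[of _ 1] exI[of _ "\<lambda>x. 0"]) (auto simp: jonq_id_def intro: poly_fun.const)
qed

lemma jonq_comp_id:
  assumes f: "f \<in> jonq_set n" shows "f \<circ> jonq_id n = f"
proof (rule ext, rule ext)
  fix x i
  show "(f \<circ> jonq_id n) x i = f x i"
  proof (cases "i \<in> {1..n}")
    case True
    have "\<forall>j\<in>{i..n}. jonq_id n x j = x j" using True unfolding jonq_id_def by auto
    then show ?thesis using jonq_dep[OF f True] by simp
  next
    case False then show ?thesis using jonq_setD(1)[OF f] by simp
  qed
qed

lemma jonq_id_comp: "f \<in> jonq_set n \<Longrightarrow> jonq_id n \<circ> f = f"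
  by (auto simp: fun_eq_iff jonq_id_def jonq_setD(1))

lemma jonq_carrier[simp]: "carrier (jonquieres n) = jonq_set n"
  and jonq_mult[simp]: "mult (jonquieres n) f g = f \<circ> g"
  and jonq_one[simp]: "one (jonquieres n) = jonq_id n"
  by (simp_all add: jonquieres_def)

lemma jonq_monoid: "monoid (jonquieres n)"
proof
  show "\<And>x y. x \<in> carrier (jonquieres n) \<Longrightarrow> y \<in> carrier (jonquieres n) \<Longrightarrow> x \<otimes>\<^bsub>jonquieres n\<^esub> y \<in> carrier (jonquieres n)"
    by (simp add: jonq_comp)
  show "\<And>x y z. x \<otimes>\<^bsub>jonquieres n\<^esub> y \<otimes>\<^bsub>jonquieres n\<^esub> z = x \<otimes>\<^bsub>jonquieres n\<^esub> (y \<otimes>\<^bsub>jonquieres n\<^esub> z)"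
    by (simp add: o_assoc)
  show "\<one>\<^bsub>jonquieres n\<^esub> \<in> carrier (jonquieres n)" by (simp add: jonq_id_in)
  show "\<And>x. x \<in> carrier (jonquieres n) \<Longrightarrow> \<one>\<^bsub>jonquieres n\<^esub> \<otimes>\<^bsub>jonquieres n\<^esub> x = x"
    by (simp add: jonq_id_comp)
  show "\<And>x. x \<in> carrier (jonquieres n) \<Longrightarrow> x \<otimes>\<^bsub>jonquieres n\<^esub> \<one>\<^bsub>jonquieres n\<^esub> = x"
    by (simp add: jonq_comp_id)
qed


lemma jonq_units:
  assumes f: "f \<in> jonq_set n"
  shows "f \<in> Units (jonquieres n)"
proof -
  interpret M: monoid "jonquieres n" by (rule jonq_monoid)
  from f obtain a p where ap: "\<forall>i\<in>{1..n}. a i \<noteq> (0::complex) \<and> p i \<in> poly_fun {i+1..n}"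
    and fd: "f = (\<lambda>x i. if i \<in> {1..n} then a i * x i + p i x else 0)"
    unfolding jonq_set_def by blast
  define gk where "gk k = (\<lambda>x i. if i \<in> {1..n} then (if i \<le> k then a i * x i + p i x else x i) else 0)" for k
  define ek where "ek k = (\<lambda>x i. if i \<in> {1..n} then (if i = k then a i * x i + p i x else x i) else 0)" for k
  define ek' where "ek' k = (\<lambda>x i. if i \<in> {1..n} then (if i = k then (x i - p i x) / a i else x i) else 0)" for k
  have idpoly: "\<exists>a p. a \<noteq> 0 \<and> p \<in> poly_fun {i+1..n} \<and> (\<forall>x. x i = a * x i + p x)" for i :: nat
    by (intro exI[of _ 1] exI[of _ "\<lambda>x. 0"]) (auto intro: poly_fun.const)
  have ek_in: "ek k \<in> jonq_set n" for k
  proof (rule jonq_setI)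
    show "\<And>x i. i \<notin> {1..n} \<Longrightarrow> ek k x i = 0" unfolding ek_def by auto
    fix i assume i: "i \<in> {1..n}"
    show "\<exists>a p. a \<noteq> 0 \<and> p \<in> poly_fun {i+1..n} \<and> (\<forall>x. ek k x i = a * x i + p x)"
    proof (cases "i = k")
      case True then show ?thesis using i ap unfolding ek_def by (intro exI[of _ "a i"] exI[of _ "p i"]) auto
    next
      case False then show ?thesis using i idpoly[of i] unfolding ek_def by auto
    qed
  qed
  have ek'_in: "ek' k \<in> jonq_set n" for k
  proof (rule jonq_setI)
    show "\<And>x i. i \<notin> {1..n} \<Longrightarrow> ek' k x i = 0" unfolding ek'_def by auto
    fix i assume i: "i \<in> {1..n}"
    show "\<exists>a p. a \<noteq> 0 \<and> p \<in> poly_fun {i+1..n} \<and> (\<forall>x. ek' k x i = a * x i + p x)"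
    proof (cases "i = k")
      case True
      have "(\<lambda>x. (-1 / a i) * p i x) \<in> poly_fun {i+1..n}" using ap i by (intro poly_fun_cmult) auto
      moreover have "\<forall>x. ek' k x i = (1 / a i) * x i + (-1 / a i) * p i x"
        using True i ap unfolding ek'_def by (auto simp: field_simps)
      moreover have "1 / a i \<noteq> 0" using ap i by auto
      ultimately show ?thesis by blast
    next
      case False then show ?thesis using i idpoly[of i] unfolding ek'_def by auto
    qed
  qed
  have gk_in: "gk k \<in> jonq_set n" for k
  proof (rule jonq_setI)
    show "\<And>x i. i \<notin> {1..n} \<Longrightarrow> gk k x i = 0" unfolding gk_def by auto
    fix i assume i: "i \<in> {1..n}"
    show "\<exists>a p. a \<noteq> 0 \<and> p \<in> poly_fun {i+1..n} \<and> (\<forall>x. gk k x i = a * x i + p x)"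
    proof (cases "i \<le> k")
      case True then show ?thesis using i ap unfolding gk_def by (intro exI[of _ "a i"] exI[of _ "p i"]) auto
    next
      case False then show ?thesis using i idpoly[of i] unfolding gk_def by auto
    qed
  qed
  have pek: "p k (ek k x) = p k x" "p k (ek' k x) = p k x" if "k \<in> {1..n}" for k x
  proof -
    have pk: "p k \<in> poly_fun {k+1..n}" using ap that by auto
    show "p k (ek k x) = p k x" by (rule poly_fun_dep[OF pk]) (auto simp: ek_def)
    show "p k (ek' k x) = p k x" by (rule poly_fun_dep[OF pk]) (auto simp: ek'_def)
  qed
  have ek_unit: "ek k \<in> Units (jonquieres n)" if k: "k \<in> {1..n}" for k
  proof -
    have ak: "a k \<noteq> 0" using ap k by auto
    have 1: "ek' k \<circ> ek k = jonq_id n"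
    proof (rule ext, rule ext)
      fix x i
      show "(ek' k \<circ> ek k) x i = jonq_id n x i"
      proof (cases "i = k")
        case True
        have e: "ek k x k = a k * x k + p k x" using k by (simp add: ek_def)
        have "(ek' k \<circ> ek k) x k = (ek k x k - p k (ek k x)) / a k" using k by (simp add: ek'_def)
        also have "\<dots> = x k" using e pek(1)[OF k] ak by simp
        finally show ?thesis using True k by (simp add: jonq_id_def)
      next
        case False then show ?thesis by (simp add: ek'_def ek_def jonq_id_def)
      qed
    qed
    have 2: "ek k \<circ> ek' k = jonq_id n"
    proof (rule ext, rule ext)
      fix x i
      show "(ek k \<circ> ek' k) x i = jonq_id n x i"
      proof (cases "i = k")
        case True
        have e: "ek' k x k = (x k - p k x) / a k" using k by (simp add: ek'_def)
        have "(ek k \<circ> ek' k) x k = a k * ek' k x k + p k (ek' k x)" using k by (simp add: ek_def)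
        also have "\<dots> = x k" using e pek(2)[OF k] ak by simp
        finally show ?thesis using True k by (simp add: jonq_id_def)
      next
        case False then show ?thesis by (simp add: ek'_def ek_def jonq_id_def)
      qed
    qed
    show ?thesis unfolding Units_def using 1 2 ek_in ek'_in by auto
  qed
  have step: "gk (Suc k) = ek (Suc k) \<circ> gk k" if "Suc k \<le> n" for k
  proof (rule ext, rule ext)
    fix x i
    show "gk (Suc k) x i = (ek (Suc k) \<circ> gk k) x i"
    proof (cases "i = Suc k")
      case True
      have pk: "p i \<in> poly_fun {i+1..n}" using ap that True by auto
      have "p i (gk k x) = p i x" by (rule poly_fun_dep[OF pk]) (auto simp: gk_def True)
      then show ?thesis using True that by (auto simp: gk_def ek_def)
    next
      case False then show ?thesis by (auto simp: gk_def ek_def)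
    qed
  qed
  have "gk k \<in> Units (jonquieres n)" if "k \<le> n" for k
    using that
  proof (induction k)
    case 0
    have "gk 0 = jonq_id n" by (auto simp: fun_eq_iff gk_def jonq_id_def)
    then show ?case using M.Units_one_closed by simp
  next
    case (Suc k)
    then have "ek (Suc k) \<otimes>\<^bsub>jonquieres n\<^esub> gk k \<in> Units (jonquieres n)"
      using ek_unit[of "Suc k"] by (intro M.Units_m_closed) auto
    then show ?case using step[OF Suc.prems] by (simp only: jonq_mult)
  qed
  moreover have "gk n = f" unfolding fd gk_def by (auto simp: fun_eq_iff)
  ultimately show ?thesis by auto
qed

lemma jonq_group: "group (jonquieres n)"
  by (rule group.intro[OF jonq_monoid]) (auto simp: group_axioms_def jonq_units)


lemma cf_comp:
  assumes f: "f \<in> jonq_set n" and g: "g \<in> jonq_set n" and i: "i \<in> {1..n}"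
  shows "cf (f \<circ> g) i = cf f i * cf g i"
proof -
  obtain p where p: "p \<in> poly_fun {i+1..n}" "\<forall>x. f x i = cf f i * x i + p x"
    using jonq_cf(2)[OF f i] by blast
  obtain q where q: "q \<in> poly_fun {i+1..n}" "\<forall>x. g x i = cf g i * x i + q x"
    using jonq_cf(2)[OF g i] by blast
  show ?thesis
  proof (rule cf_unique[where B="\<lambda>x. cf f i * q x + p (g x)" and n=n])
    show "(f \<circ> g) x i = cf f i * cf g i * x i + (cf f i * q x + p (g x))" for x
      using p q by (simp add: algebra_simps)
    fix x y :: "nat \<Rightarrow> complex" assume xy: "\<forall>j\<in>{i+1..n}. x j = y j"
    have "q x = q y" using poly_fun_dep[OF q(1) xy] .
    moreover have "p (g x) = p (g y)"
    proof (rule poly_fun_dep[OF p(1)], intro ballI)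
      fix j assume j: "j \<in> {i+1..n}"
      show "g x j = g y j" using j i xy by (intro jonq_dep[OF g]) auto
    qed
    ultimately show "cf f i * q x + p (g x) = cf f i * q y + p (g y)" by simp
  qed
qed

lemma cf_id: "i \<in> {1..n} \<Longrightarrow> cf (jonq_id n) i = 1"
  by (simp add: cf_def jonq_id_def)

definition Nk :: "nat \<Rightarrow> nat \<Rightarrow> ((nat \<Rightarrow> complex) \<Rightarrow> (nat \<Rightarrow> complex)) set" where
  "Nk n k = {f \<in> jonq_set n. \<forall>i\<in>{1..n}. cf f i = 1 \<and> (k < i \<longrightarrow> (\<forall>x. f x i = x i))}"

lemma cf_inv:
  assumes f: "f \<in> jonq_set n" and i: "i \<in> {1..n}"
  shows "cf (inv\<^bsub>jonquieres n\<^esub> f) i = 1 / cf f i"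
proof -
  interpret G: group "jonquieres n" by (rule jonq_group)
  have fi: "inv\<^bsub>jonquieres n\<^esub> f \<in> jonq_set n" using G.inv_closed[of f] f by simp
  have "f \<circ> inv\<^bsub>jonquieres n\<^esub> f = jonq_id n" using G.r_inv[of f] f by simp
  then have "cf f i * cf (inv\<^bsub>jonquieres n\<^esub> f) i = 1" using cf_comp[OF f fi i] cf_id[OF i] by simp
  then show ?thesis using jonq_cf(1)[OF f i] by (simp add: field_simps)
qed

lemma Nk_subgroup: "subgroup (Nk n k) (jonquieres n)"
proof -
  interpret G: group "jonquieres n" by (rule jonq_group)
  show ?thesis
  proof
    show "Nk n k \<subseteq> carrier (jonquieres n)" by (auto simp: Nk_def)
    show "\<one>\<^bsub>jonquieres n\<^esub> \<in> Nk n k" by (auto simp: Nk_def jonq_id_in cf_id) (simp add: jonq_id_def)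
    fix f g assume f: "f \<in> Nk n k" and g: "g \<in> Nk n k"
    then have fc: "f \<in> jonq_set n" and gc: "g \<in> jonq_set n" by (auto simp: Nk_def)
    show "f \<otimes>\<^bsub>jonquieres n\<^esub> g \<in> Nk n k"
      using f g by (auto simp: Nk_def jonq_comp cf_comp)
    show "inv\<^bsub>jonquieres n\<^esub> f \<in> Nk n k"
    proof -
      have fi: "inv\<^bsub>jonquieres n\<^esub> f \<in> jonq_set n" using G.inv_closed[of f] fc by simp
      have fr: "f \<circ> inv\<^bsub>jonquieres n\<^esub> f = jonq_id n" using G.r_inv[of f] fc by simp
      have "(inv\<^bsub>jonquieres n\<^esub> f) x i = x i" if i: "i \<in> {1..n}" "k < i" for x i
      proof -
        have "(inv\<^bsub>jonquieres n\<^esub> f) x i = f ((inv\<^bsub>jonquieres n\<^esub> f) x) i" using f i by (simp add: Nk_def)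
        also have "\<dots> = jonq_id n x i" using fr by (metis comp_apply)
        finally show ?thesis using i by (simp add: jonq_id_def)
      qed
      then show ?thesis using fi f cf_inv[OF fc] by (auto simp: Nk_def)
    qed
  qed
qed

lemma derived_carrier_Nk:
  "derived (jonquieres n) (carrier (jonquieres n)) \<subseteq> Nk n n"
proof -
  interpret G: group "jonquieres n" by (rule jonq_group)
  have "derived_set (jonquieres n) (carrier (jonquieres n)) \<subseteq> Nk n n"
  proof (intro subsetI)
    fix c assume "c \<in> derived_set (jonquieres n) (carrier (jonquieres n))"
    then obtain h1 h2 where h: "h1 \<in> jonq_set n" "h2 \<in> jonq_set n"
      and c: "c = h1 \<circ> h2 \<circ> inv\<^bsub>jonquieres n\<^esub> h1 \<circ> inv\<^bsub>jonquieres n\<^esub> h2" by auto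
    have i1: "inv\<^bsub>jonquieres n\<^esub> h1 \<in> jonq_set n" and i2: "inv\<^bsub>jonquieres n\<^esub> h2 \<in> jonq_set n"
      using G.inv_closed h by auto
    have cc: "c \<in> jonq_set n" using c h i1 i2 by (simp add: jonq_comp)
    have "cf c i = 1" if i: "i \<in> {1..n}" for i
    proof -
      have p12: "h1 \<circ> h2 \<in> jonq_set n" using h by (simp add: jonq_comp)
      have p123: "h1 \<circ> h2 \<circ> inv\<^bsub>jonquieres n\<^esub> h1 \<in> jonq_set n" using p12 i1 by (simp add: jonq_comp)
      have "cf c i = cf h1 i * cf h2 i * cf (inv\<^bsub>jonquieres n\<^esub> h1) i * cf (inv\<^bsub>jonquieres n\<^esub> h2) i"
        unfolding c cf_comp[OF p123 i2 i] cf_comp[OF p12 i1 i] cf_comp[OF h i] ..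
      then have "cf c i = cf h1 i * cf h2 i * (1 / cf h1 i) * (1 / cf h2 i)"
        using cf_inv[OF h(1) i] cf_inv[OF h(2) i] by simp
      then show ?thesis using jonq_cf(1)[OF h(1) i] jonq_cf(1)[OF h(2) i] by simp
    qed
    then show "c \<in> Nk n n" using cc by (auto simp: Nk_def)
  qed
  then show ?thesis unfolding derived_def
    using G.generate_subgroup_incl Nk_subgroup by blast
qed

lemma derived_Nk:
  assumes k: "1 \<le> k" "k \<le> n"
  shows "derived (jonquieres n) (Nk n k) \<subseteq> Nk n (k - 1)"
proof -
  interpret G: group "jonquieres n" by (rule jonq_group)
  interpret S: subgroup "Nk n k" "jonquieres n" by (rule Nk_subgroup)
  have kr: "k \<in> {1..n}" using k by auto
  have tr_comp: "(f \<circ> g) x k - x k = (f x k - x k) + (g x k - x k)"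
    if f: "f \<in> Nk n k" and g: "g \<in> Nk n k" for f g x
  proof -
    have fc: "f \<in> jonq_set n" and cff: "cf f k = 1" using f kr by (auto simp: Nk_def)
    have "\<forall>j\<in>{k+1..n}. g x j = x j" using g by (auto simp: Nk_def)
    then have "f (g x) k - cf f k * g x k = f x k - cf f k * x k"
      by (intro jonq_rest[OF fc kr]) auto
    then have "f (g x) k = (f x k - x k) + g x k" using cff by (simp add: diff_eq_eq)
    then show ?thesis by (simp add: algebra_simps)
  qed
  have tr_inv: "(inv\<^bsub>jonquieres n\<^esub> f) x k - x k = - (f x k - x k)" if f: "f \<in> Nk n k" for f x
  proof -
    have fi: "inv\<^bsub>jonquieres n\<^esub> f \<in> Nk n k" using S.m_inv_closed f by simp
    have fc: "f \<in> jonq_set n" using f by (simp add: Nk_def)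
    have "f \<circ> inv\<^bsub>jonquieres n\<^esub> f = jonq_id n" using G.r_inv[of f] fc by simp
    then have "0 = (f \<circ> inv\<^bsub>jonquieres n\<^esub> f) x k - x k" using kr by (simp add: jonq_id_def)
    also have "\<dots> = (f x k - x k) + ((inv\<^bsub>jonquieres n\<^esub> f) x k - x k)" by (rule tr_comp[OF f fi])
    finally show ?thesis by (simp add: algebra_simps)
  qed
  have "derived_set (jonquieres n) (Nk n k) \<subseteq> Nk n (k - 1)"
  proof (intro subsetI)
    fix c assume "c \<in> derived_set (jonquieres n) (Nk n k)"
    then obtain h1 h2 where h: "h1 \<in> Nk n k" "h2 \<in> Nk n k"
      and c: "c = h1 \<circ> h2 \<circ> inv\<^bsub>jonquieres n\<^esub> h1 \<circ> inv\<^bsub>jonquieres n\<^esub> h2" by auto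
    have i1: "inv\<^bsub>jonquieres n\<^esub> h1 \<in> Nk n k" and i2: "inv\<^bsub>jonquieres n\<^esub> h2 \<in> Nk n k"
      using S.m_inv_closed h by auto
    have p12: "h1 \<circ> h2 \<in> Nk n k" using S.m_closed h by simp
    have p123: "h1 \<circ> h2 \<circ> inv\<^bsub>jonquieres n\<^esub> h1 \<in> Nk n k" using S.m_closed[OF p12 i1] by simp
    have cN: "c \<in> Nk n k" using S.m_closed[OF p123 i2] c by simp
    have ck: "c x k = x k" for x
    proof -
      have "c x k - x k = (h1 x k - x k) + (h2 x k - x k) + ((inv\<^bsub>jonquieres n\<^esub> h1) x k - x k)
            + ((inv\<^bsub>jonquieres n\<^esub> h2) x k - x k)"
        unfolding c tr_comp[OF p123 i2] tr_comp[OF p12 i1] tr_comp[OF h] ..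
      also have "\<dots> = 0" using tr_inv[OF h(1)] tr_inv[OF h(2)] by simp
      finally show ?thesis by simp
    qed
    show "c \<in> Nk n (k - 1)"
    proof -
      have "\<forall>i\<in>{1..n}. k - 1 < i \<longrightarrow> (\<forall>x. c x i = x i)"
      proof (intro ballI impI allI)
        fix i x assume "i \<in> {1..n}" "k - 1 < i"
        then show "c x i = x i" using cN ck by (cases "i = k") (auto simp: Nk_def)
      qed
      then show ?thesis using cN by (auto simp: Nk_def)
    qed
  qed
  then show ?thesis unfolding derived_def
    using G.generate_subgroup_incl Nk_subgroup by blast
qed

lemma Nk_0: "Nk n 0 \<subseteq> {jonq_id n}"
proof
  fix f assume f: "f \<in> Nk n 0"
  then have fc: "f \<in> jonq_set n" and fi: "\<And>i x. i \<in> {1..n} \<Longrightarrow> f x i = x i"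
    unfolding Nk_def by auto
  have "f = jonq_id n"
  proof (rule ext, rule ext)
    fix x i show "f x i = jonq_id n x i"
    proof (cases "i \<in> {1..n}")
      case True then show ?thesis using fi[OF True] by (simp add: jonq_id_def)
    next
      case False
      have "jonq_id n x i = 0" unfolding jonq_id_def by (simp only: if_not_P[OF False])
      then show ?thesis using jonq_setD(1)[OF fc False] by simp
    qed
  qed
  then show "f \<in> {jonq_id n}" by simp
qed

lemma derived_upper:
  "1 \<le> j \<Longrightarrow> j \<le> n + 1 \<Longrightarrow> (derived (jonquieres n) ^^ j) (carrier (jonquieres n)) \<subseteq> Nk n (n + 1 - j)"
proof (induction j)
  case 0 then show ?case by simp
next
  case (Suc j)
  show ?case
  proof (cases "j = 0")
    case True then show ?thesis using derived_carrier_Nk by simp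
  next
    case False
    interpret G: group "jonquieres n" by (rule jonq_group)
    have IH: "(derived (jonquieres n) ^^ j) (carrier (jonquieres n)) \<subseteq> Nk n (n + 1 - j)"
      using Suc False by simp
    have "(derived (jonquieres n) ^^ Suc j) (carrier (jonquieres n))
        = derived (jonquieres n) ((derived (jonquieres n) ^^ j) (carrier (jonquieres n)))" by simp
    also have "\<dots> \<subseteq> derived (jonquieres n) (Nk n (n + 1 - j))"
      by (rule G.mono_derived[OF IH])
    also have "\<dots> \<subseteq> Nk n (n + 1 - j - 1)"
      using Suc.prems False by (intro derived_Nk) auto
    also have "n + 1 - j - 1 = n + 1 - Suc j" by simp
    finally show ?thesis .
  qed
qed

definition Em :: "nat \<Rightarrow> nat \<Rightarrow> nat \<Rightarrow> complex \<Rightarrow> (nat \<Rightarrow> complex) \<Rightarrow> (nat \<Rightarrow> complex)" where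
  "Em n m r c = (\<lambda>x i. if i \<in> {1..n} then (if i = m then x i + c * (\<Prod>l\<in>{m+1..m+r}. x l) else x i) else 0)"

definition dg :: "nat \<Rightarrow> nat \<Rightarrow> complex \<Rightarrow> (nat \<Rightarrow> complex) \<Rightarrow> (nat \<Rightarrow> complex)" where
  "dg n m a = (\<lambda>x i. if i \<in> {1..n} then (if i = m then a * x i else x i) else 0)"

lemma Em_m: "m \<in> {1..n} \<Longrightarrow> Em n m r c x m = x m + c * (\<Prod>l\<in>{m+1..m+r}. x l)"
  by (simp add: Em_def)
lemma Em_o: "i \<noteq> m \<Longrightarrow> Em n m r c x i = (if i \<in> {1..n} then x i else 0)"
  by (simp add: Em_def)
lemma dg_m: "m \<in> {1..n} \<Longrightarrow> dg n m a x m = a * x m"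
  by (simp add: dg_def)
lemma dg_o: "i \<noteq> m \<Longrightarrow> dg n m a x i = (if i \<in> {1..n} then x i else 0)"
  by (simp add: dg_def)

lemma prod_keep:
  assumes "\<And>l. l \<in> S \<Longrightarrow> y l = x l"
  shows "prod y S = prod x S"
  using assms by (rule prod.cong[OF refl])

lemma prod_Suc_split: "(\<Prod>l\<in>{m+1..m+Suc r}. x l) = (\<Prod>l\<in>{m+1..m+r}. x l) * (x (m + Suc r) :: complex)"
  by (simp add: atLeastAtMostSuc_conv mult.commute)

lemma comm_dg:
  assumes m: "m \<in> {1..n}" and mr: "m + r \<le> n"
  shows "dg n m 2 \<circ> Em n m r c \<circ> dg n m (1/2) \<circ> Em n m r (-c) = Em n m r c"
proof (rule ext, rule ext)
  fix x :: "nat \<Rightarrow> complex" and i :: nat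
  let ?S = "{m+1..m+r}"
  have keep: "\<And>y. (\<And>l. l \<in> {1..n} \<Longrightarrow> l \<noteq> m \<Longrightarrow> y l = x l) \<Longrightarrow> prod y ?S = prod x ?S"
    by (rule prod_keep) (use mr in auto)
  define y1 where "y1 = Em n m r (-c) x"
  define y2 where "y2 = dg n m (1/2) y1"
  define y3 where "y3 = Em n m r c y2"
  have y1o: "l \<in> {1..n} \<Longrightarrow> l \<noteq> m \<Longrightarrow> y1 l = x l" for l by (simp add: y1_def Em_o)
  have y2o: "l \<in> {1..n} \<Longrightarrow> l \<noteq> m \<Longrightarrow> y2 l = x l" for l by (simp add: y2_def dg_o y1o)
  have y3o: "l \<in> {1..n} \<Longrightarrow> l \<noteq> m \<Longrightarrow> y3 l = x l" for l by (simp add: y3_def Em_o y2o)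
  have py2: "prod y2 ?S = prod x ?S" by (rule keep) (rule y2o)
  have y1m: "y1 m = x m - c * prod x ?S" using m by (simp add: y1_def Em_m)
  have y2m: "y2 m = y1 m / 2" using m by (simp add: y2_def dg_m)
  have "y3 m = y2 m + c * prod y2 ?S" unfolding y3_def by (rule Em_m[OF m])
  then have y3m: "y3 m = (x m - c * prod x ?S) / 2 + c * prod x ?S"
    unfolding py2 y2m y1m .
  show "(dg n m 2 \<circ> Em n m r c \<circ> dg n m (1/2) \<circ> Em n m r (-c)) x i = Em n m r c x i"
  proof (cases "i = m")
    case True
    have "(dg n m 2 \<circ> Em n m r c \<circ> dg n m (1/2) \<circ> Em n m r (-c)) x i = 2 * y3 m"
      using True m by (simp add: y3_def y2_def y1_def dg_m)
    also have "\<dots> = x m + c * prod x ?S" using y3m by (simp add: field_simps)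
    finally show ?thesis using True m by (simp add: Em_m)
  next
    case False
    then show ?thesis by (simp add: dg_o Em_o)
  qed
qed

lemma comm_T:
  assumes m: "m \<in> {1..n}" and kn: "m + Suc r \<le> n"
  shows "Em n m (Suc r) c \<circ> Em n (m + Suc r) 0 1 \<circ> Em n m (Suc r) (-c) \<circ> Em n (m + Suc r) 0 (-1) = Em n m r c"
proof (rule ext, rule ext)
  fix x :: "nat \<Rightarrow> complex" and i :: nat
  let ?S = "{m+1..m+r}"
  let ?k = "m + Suc r"
  have k: "?k \<in> {1..n}" using kn by auto
  have km: "?k \<noteq> m" by simp
  have keep: "\<And>y. (\<And>l. l \<in> {1..n} \<Longrightarrow> l \<noteq> m \<Longrightarrow> l \<noteq> ?k \<Longrightarrow> y l = x l) \<Longrightarrow> prod y ?S = prod x ?S"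
    by (rule prod_keep) (use kn in auto)
  define y1 where "y1 = Em n ?k 0 (-1) x"
  define y2 where "y2 = Em n m (Suc r) (-c) y1"
  define y3 where "y3 = Em n ?k 0 1 y2"
  have y1o: "l \<in> {1..n} \<Longrightarrow> l \<noteq> ?k \<Longrightarrow> y1 l = x l" for l unfolding y1_def by (subst Em_o) auto
  have y1k: "y1 ?k = x ?k - 1" unfolding y1_def using Em_m[OF k, of 0 "-1" x] by simp
  have y2o: "l \<in> {1..n} \<Longrightarrow> l \<noteq> m \<Longrightarrow> y2 l = y1 l" for l unfolding y2_def by (subst Em_o) auto
  have y3o: "l \<in> {1..n} \<Longrightarrow> l \<noteq> ?k \<Longrightarrow> y3 l = y2 l" for l unfolding y3_def by (subst Em_o) auto
  have y3k: "y3 ?k = y2 ?k + 1" unfolding y3_def using Em_m[OF k, of 0 1 y2] by simp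
  have p1: "prod y1 ?S = prod x ?S" by (rule keep) (simp add: y1o)
  have p3: "prod y3 ?S = prod x ?S" by (rule keep) (simp add: y3o y2o y1o)
  have "y2 m = y1 m + (-c) * prod y1 {m+1..m+Suc r}" unfolding y2_def by (rule Em_m[OF m])
  then have y2m: "y2 m = x m - c * (prod x ?S * (x ?k - 1))"
    unfolding prod_Suc_split p1 y1k using y1o[OF m] km by simp
  have y3m: "y3 m = y2 m" using y3o[OF m] km by simp
  have y3k': "y3 ?k = x ?k" using y3k y2o[OF k km] y1k by simp
  show "(Em n m (Suc r) c \<circ> Em n ?k 0 1 \<circ> Em n m (Suc r) (-c) \<circ> Em n ?k 0 (-1)) x i = Em n m r c x i"
  proof (cases "i = m")
    case True
    have "(Em n m (Suc r) c \<circ> Em n ?k 0 1 \<circ> Em n m (Suc r) (-c) \<circ> Em n ?k 0 (-1)) x i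
        = y3 m + c * prod y3 {m+1..m+Suc r}"
      using True Em_m[OF m, of "Suc r" c y3] by (simp add: y3_def y2_def y1_def)
    also have "\<dots> = x m + c * prod x ?S"
      unfolding prod_Suc_split p3 y3k' y3m y2m by (simp add: algebra_simps)
    finally show ?thesis using True Em_m[OF m] by simp
  next
    case False
    show ?thesis
    proof (cases "i = ?k")
      case True
      have "(Em n m (Suc r) c \<circ> Em n ?k 0 1 \<circ> Em n m (Suc r) (-c) \<circ> Em n ?k 0 (-1)) x i = y3 ?k"
        using True km Em_o[of ?k m n "Suc r" c y3] k by (simp add: y3_def y2_def y1_def)
      then show ?thesis using y3k' True False k Em_o[of i m n r c x] by simp
    next
      case False2: False
      then show ?thesis using False by (simp add: Em_o)
    qed
  qed
qed


lemma Em_in: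
  assumes mr: "m + r \<le> n"
  shows "Em n m r c \<in> jonq_set n"
proof (rule jonq_setI)
  show "\<And>x i. i \<notin> {1..n} \<Longrightarrow> Em n m r c x i = 0" unfolding Em_def by auto
  fix i assume i: "i \<in> {1..n}"
  show "\<exists>a p. a \<noteq> 0 \<and> p \<in> poly_fun {i+1..n} \<and> (\<forall>x. Em n m r c x i = a * x i + p x)"
  proof (cases "i = m")
    case True
    have "(\<lambda>x. c * (\<Prod>l\<in>{m+1..m+r}. x l)) \<in> poly_fun {i+1..n}"
      using mr True by (intro poly_fun_cmult poly_fun_prod) auto
    then show ?thesis using True i unfolding Em_def
      by (intro exI[of _ 1] exI[of _ "\<lambda>x. c * (\<Prod>l\<in>{m+1..m+r}. x l)"]) auto
  next
    case False then show ?thesis using i unfolding Em_def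
      by (intro exI[of _ 1] exI[of _ "\<lambda>x. 0"]) (auto intro: poly_fun.const)
  qed
qed

lemma dg_in:
  assumes "a \<noteq> 0"
  shows "dg n m a \<in> jonq_set n"
proof (rule jonq_setI)
  show "\<And>x i. i \<notin> {1..n} \<Longrightarrow> dg n m a x i = 0" unfolding dg_def by auto
  fix i assume i: "i \<in> {1..n}"
  show "\<exists>b p. b \<noteq> 0 \<and> p \<in> poly_fun {i+1..n} \<and> (\<forall>x. dg n m a x i = b * x i + p x)"
  proof (cases "i = m")
    case True then show ?thesis using i assms unfolding dg_def
      by (intro exI[of _ a] exI[of _ "\<lambda>x. 0"]) (auto intro: poly_fun.const)
  next
    case False then show ?thesis using i unfolding dg_def
      by (intro exI[of _ 1] exI[of _ "\<lambda>x. 0"]) (auto intro: poly_fun.const)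
  qed
qed

lemma Em_inv_comp:
  assumes m: "m \<in> {1..n}" and mr: "m + r \<le> n"
  shows "Em n m r (-c) \<circ> Em n m r c = jonq_id n"
proof (rule ext, rule ext)
  fix x :: "nat \<Rightarrow> complex" and i :: nat
  have pk: "prod (Em n m r c x) {m+1..m+r} = prod x {m+1..m+r}"
    by (rule prod_keep) (use mr in \<open>auto simp: Em_def\<close>)
  show "(Em n m r (-c) \<circ> Em n m r c) x i = jonq_id n x i"
  proof (cases "i = m")
    case True
    have "(Em n m r (-c) \<circ> Em n m r c) x i = Em n m r c x m + (-c) * prod (Em n m r c x) {m+1..m+r}"
      using True Em_m[OF m] by simp
    also have "\<dots> = x m" unfolding pk Em_m[OF m] by simp
    finally show ?thesis using True m by (simp add: jonq_id_def)
  next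
    case False then show ?thesis by (simp add: Em_o jonq_id_def)
  qed
qed

lemma dg_inv_comp: "dg n m (1/2) \<circ> dg n m 2 = jonq_id n"
  by (auto simp: fun_eq_iff dg_def jonq_id_def)

lemma Em_inv:
  assumes m: "m \<in> {1..n}" and mr: "m + r \<le> n"
  shows "inv\<^bsub>jonquieres n\<^esub> (Em n m r c) = Em n m r (-c)"
proof -
  interpret G: group "jonquieres n" by (rule jonq_group)
  show ?thesis using Em_inv_comp[OF m mr] Em_in[OF mr] by (intro G.inv_equality) auto
qed

lemma dg_inv: "inv\<^bsub>jonquieres n\<^esub> (dg n m 2) = dg n m (1/2)"
proof -
  interpret G: group "jonquieres n" by (rule jonq_group)
  show ?thesis using dg_inv_comp dg_in by (intro G.inv_equality) auto
qed

lemma derived_lower: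
  "\<forall>m r c. 1 \<le> m \<longrightarrow> m + r \<le> n \<longrightarrow> m + r + j \<le> n + 1 \<longrightarrow>
     Em n m r c \<in> (derived (jonquieres n) ^^ j) (carrier (jonquieres n))"
proof (induction j)
  case 0 then show ?case using Em_in by simp
next
  case (Suc j)
  interpret G: group "jonquieres n" by (rule jonq_group)
  let ?D = "(derived (jonquieres n) ^^ j) (carrier (jonquieres n))"
  show ?case
  proof (intro allI impI)
    fix m r c assume m1: "1 \<le> m" and mr: "m + r \<le> n" and mj: "m + r + Suc j \<le> n + 1"
    have m: "m \<in> {1..n}" using m1 mr by auto
    have "Em n m r c \<in> derived_set (jonquieres n) ?D"
    proof (cases "j = 0")
      case True
      have "dg n m 2 \<in> ?D" "Em n m r c \<in> ?D" using True dg_in[of 2] Em_in[OF mr] by auto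
      moreover have "Em n m r c = dg n m 2 \<otimes>\<^bsub>jonquieres n\<^esub> Em n m r c \<otimes>\<^bsub>jonquieres n\<^esub>
          inv\<^bsub>jonquieres n\<^esub> (dg n m 2) \<otimes>\<^bsub>jonquieres n\<^esub> inv\<^bsub>jonquieres n\<^esub> (Em n m r c)"
        using comm_dg[OF m mr] by (simp add: dg_inv Em_inv[OF m mr])
      ultimately show ?thesis by blast
    next
      case False
      have mr1: "m + Suc r \<le> n" using mj False by simp
      have "Em n m (Suc r) c \<in> ?D" using Suc.IH m1 mr1 mj by simp
      moreover have "Em n (m + Suc r) 0 1 \<in> ?D" using Suc.IH mr1 mj by simp
      moreover have "Em n m r c = Em n m (Suc r) c \<otimes>\<^bsub>jonquieres n\<^esub> Em n (m + Suc r) 0 1 \<otimes>\<^bsub>jonquieres n\<^esub>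
          inv\<^bsub>jonquieres n\<^esub> (Em n m (Suc r) c) \<otimes>\<^bsub>jonquieres n\<^esub> inv\<^bsub>jonquieres n\<^esub> (Em n (m + Suc r) 0 1)"
      proof -
        have k: "m + Suc r \<in> {1..n}" using mr1 by auto
        have i2: "inv\<^bsub>jonquieres n\<^esub> (Em n (m + Suc r) 0 1) = Em n (m + Suc r) 0 (-1)"
          using Em_inv[of "m + Suc r" n 0 1] k mr1 by simp
        show ?thesis using comm_T[OF m mr1, of c]
          by (simp add: Em_inv[OF m mr1] i2 del: add_Suc_right)
      qed
      ultimately show ?thesis by blast
    qed
    then show "Em n m r c \<in> (derived (jonquieres n) ^^ Suc j) (carrier (jonquieres n))"
      by (simp add: derived_def generate.incl)
  qed
qed

theorem lemma3p2:
  fixes n :: nat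
  assumes "n \<ge> 1"
  shows "group (jonquieres n) \<and> solvable (jonquieres n) \<and> derived_length (jonquieres n) = n + 1"
proof -
  interpret G: group "jonquieres n" by (rule jonq_group)
  let ?D = "\<lambda>k. (derived (jonquieres n) ^^ k) (carrier (jonquieres n))"
  have top: "?D (n + 1) = {\<one>\<^bsub>jonquieres n\<^esub>}"
  proof
    show "?D (n + 1) \<subseteq> {\<one>\<^bsub>jonquieres n\<^esub>}" using derived_upper[of "n+1" n] Nk_0[of n] by simp
    show "{\<one>\<^bsub>jonquieres n\<^esub>} \<subseteq> ?D (n + 1)"
      using subgroup.one_closed[OF G.exp_of_derived_is_subgroup[OF G.subgroup_self]] by blast
  qed
  have low: "?D k \<noteq> {\<one>\<^bsub>jonquieres n\<^esub>}" if "k \<le> n" for k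
  proof
    assume eq: "?D k = {\<one>\<^bsub>jonquieres n\<^esub>}"
    have "Em n 1 0 1 \<in> ?D k" using derived_lower[of n k] that assms by simp
    then have "Em n 1 0 1 = jonq_id n" using eq by simp
    then have "Em n 1 0 1 (\<lambda>_. 0) 1 = jonq_id n (\<lambda>_. 0) 1" by simp
    then show False using assms by (simp add: Em_def jonq_id_def)
  qed
  have "derived_length (jonquieres n) = n + 1"
    unfolding derived_length_def
  proof (rule Least_equality)
    show "?D (n + 1) = {\<one>\<^bsub>jonquieres n\<^esub>}" by (rule top)
    fix k assume "?D k = {\<one>\<^bsub>jonquieres n\<^esub>}"
    then show "n + 1 \<le> k" using low[of k] by (cases "k \<le> n") auto
  qed
  moreover have "solvable (jonquieres n)" using G.solvable_iff_trivial_derived_seq top by blast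
  ultimately show ?thesis using jonq_group by blast
qed

end
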